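(* Let $0<q<1$, $m\in\{0,1,2,\dots\}$ and $0<\lambda<q^m(1-q)^{-1}$. Let $X\sim\mathscr{P}(\lambda;q,m)$ (defined in the context) and consider the random variable $[X]_q=\frac{1-q^X}{1-q}$ (the $q$-deformed number operator $[N]_q$ measured in the generalized coherent state). Then \[ \langle [N]_q\rangle:=\sum_{j\ge0}[j]_q\,p_j(\lambda;q,m)=\lambda+[m]_q, \] \[ \langle([N]_q-\langle[N]_q\rangle)^2\rangle:=\sum_{j\ge0}\big([j]_q-\langle[N]_q\rangle\big)^2p_j(\lambda;q,m)=\lambda^2q^m(1+q-2q^{-m})+\lambda q^m\big(2[m]_q+q^m\big). \]
   Context: The $q$-number is $[a]_q=(1-q^a)/(1-q)$. For $a\in\mathbb{C}$: $(a;q)_0=1$, $(a;q)_n=\prod_{k=0}^{n-1}(1-aq^k)$, $(a;q)_\infty=\prod_{k\ge0}(1-aq^k)$. The Wall polynomial is $P_n(x;a|q)=\sum_{k=0}^n\frac{(q^{-n};q)_k}{(aq;q)_k}\frac{(qx)^k}{(q;q)_k}$. Write $m\wedge j=\min(m,j)$, $m\vee j=\max(m,j)$, $\binom{n}{2}=n(n-1)/2$. For $0<\lambda<q^m/(1-q)$ set $\mathcal{N}_{q,m}(\lambda)=\frac{(q^{1-m}(1-q)\lambda;q)_m}{q^m\,(q^{-m}(1-q)\lambda;q)_\infty}$ and \[ p_j(\lambda;q,m)=\frac{q^{2\binom{m\wedge j}{2}}(1-q)^{|m-j|}\lambda^{|m-j|}}{\mathcal{N}_{q,m}(\lambda)\,q^{mj}(q;q)_j(q;q)_m}\left(\frac{(q;q)_{m\vee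 j}}{(q;q)_{|m-j|}}P_{m\wedge j}\big((1-q)\lambda;q^{|m-j|}\,|\,q\big)\right)^2,\quad j=0,1,2,\dots, \] the probability mass function of the generalized Euler distribution $\mathscr{P}(\lambda;q,m)$ (with $\lambda=z\bar z$). *)

theory Defs
  imports "HOL-Analysis.Analysis"
begin

definition qnum :: "real \<Rightarrow> nat \<Rightarrow> real" where
  "qnum q a = (1 - q ^ a) / (1 - q)"

definition qpoch :: "real \<Rightarrow> real \<Rightarrow> nat \<Rightarrow> real" where
  "qpoch a q n = (\<Prod>k<n. 1 - a * q ^ k)"

definition qpoch_inf :: "real \<Rightarrow> real \<Rightarrow> real" where
  "qpoch_inf a q = (\<Prod>k. 1 - a * q ^ k)"

definition wall_poly :: "nat \<Rightarrow> real \<Rightarrow> real \<Rightarrow> real \<Rightarrow> real" where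
  "wall_poly n x a q =
     (\<Sum>k\<le>n. qpoch (inverse (q ^ n)) q k / qpoch (a * q) q k * (q * x) ^ k / qpoch q q k)"

definition gen_euler_norm :: "real \<Rightarrow> nat \<Rightarrow> real \<Rightarrow> real" where
  "gen_euler_norm q m lam =
     qpoch (q * inverse (q ^ m) * (1 - q) * lam) q m /
       (q ^ m * qpoch_inf (inverse (q ^ m) * (1 - q) * lam) q)"

definition gen_euler_pmf :: "real \<Rightarrow> nat \<Rightarrow> real \<Rightarrow> nat \<Rightarrow> real" where
  "gen_euler_pmf q m lam j =
     (let d = max m j - min m j in
       q ^ (2 * (min m j * (min m j - 1) div 2)) * (1 - q) ^ d * lam ^ d /
         (gen_euler_norm q m lam * q ^ (m * j) * qpoch q q j * qpoch q q m) *
       (qpoch q q (max m j) / qpoch q q d * wall_poly (min m j) ((1 - q) * lam) (q ^ d) q)\<^sup>2)"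

end

theory Submission
  imports Defs
begin


fun tri :: "nat \<Rightarrow> nat" where
  "tri 0 = 0" | "tri (Suc n) = tri n + n"

lemma tri_double: "2 * tri n + n = n * n"
  by (induction n) (auto simp: algebra_simps)

lemma tri_eq: "tri n = n * (n - 1) div 2"
proof -
  have "2 * tri n = n * (n - 1)" using tri_double[of n]
    by (cases n) (auto simp: algebra_simps)
  then show ?thesis by simp
qed

lemma tri_add: "tri (k + r) = tri k + tri r + k * r"
  by (induction r) (auto simp: algebra_simps)

definition ff :: "real \<Rightarrow> nat \<Rightarrow> nat \<Rightarrow> real" where
  "ff q j b = (\<Prod>i<b. 1 - q ^ j / q ^ i)"

lemma ff_0 [simp]: "ff q j 0 = 1" by (simp add: ff_def)

lemma ff_Suc: "ff q j (Suc b) = ff q j b * (1 - q ^ j / q ^ b)"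
  by (simp add: ff_def)

lemma ff_Suc_Suc: assumes "q \<noteq> 0" shows "ff q (Suc j) (Suc b) = (1 - q ^ Suc j) * ff q j b"
proof -
  have "ff q (Suc j) (Suc b) = (\<Prod>i<Suc b. 1 - q ^ Suc j / q ^ i)" by (simp add: ff_def)
  also have "\<dots> = (1 - q ^ Suc j / q ^ 0) * (\<Prod>i<b. 1 - q ^ Suc j / q ^ Suc i)"
    by (rule prod.lessThan_Suc_shift)
  also have "(\<Prod>i<b. 1 - q ^ Suc j / q ^ Suc i) = ff q j b"
    unfolding ff_def using assms by (intro prod.cong) auto
  finally show ?thesis by simp
qed

lemma ff_zero: assumes "q \<noteq> 0" "j < b" shows "ff q j b = 0"
  unfolding ff_def using assms by (intro prod_zero) (auto intro!: bexI[of _ j])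

lemma ff_bounds: assumes "0 < q" "q < 1" shows "0 \<le> ff q j b \<and> ff q j b \<le> 1"
proof (induction b)
  case 0 then show ?case by simp
next
  case (Suc b)
  show ?case
  proof (cases "b < j")
    case True
    have "q ^ j \<le> q ^ b" using True assms by (intro power_decreasing) auto
    then have "0 \<le> 1 - q ^ j / q ^ b" "1 - q ^ j / q ^ b \<le> 1" using assms by (auto simp: field_simps)
    then show ?thesis using Suc by (auto simp: ff_Suc intro: mult_nonneg_nonneg mult_le_one)
  next
    case False
    then have "ff q j (Suc b) = 0" using assms by (intro ff_zero) auto
    then show ?thesis by simp
  qed
qed

lemma qpow_lt1: assumes "0 < (q::real)" "q < 1" "0 < n" shows "q ^ n < 1"
  using assms by (simp add: power_less_one_iff)

lemma qpow_le1: assumes "0 < (q::real)" "q < 1" shows "q ^ n \<le> 1"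
  using assms by (simp add: power_le_one)

lemma qpoch_Suc: "qpoch a q (Suc n) = qpoch a q n * (1 - a * q ^ n)"
  by (simp add: qpoch_def)

lemma qqpoch_Suc: "qpoch q q (Suc n) = qpoch q q n * (1 - q ^ Suc n)"
  by (simp add: qpoch_def)

lemma qqpoch_pos: assumes "0 < q" "q < 1" shows "0 < qpoch q q n"
proof (induction n)
  case 0 then show ?case by (simp add: qpoch_def)
next
  case (Suc n)
  have "q ^ Suc n < 1" using assms by (intro qpow_lt1) auto
  then show ?case using Suc by (simp add: qqpoch_Suc)
qed

lemma ff_qpoch: assumes "0 < q" "q < 1" "b \<le> M" shows "ff q M b * qpoch q q (M - b) = qpoch q q M"
  using assms(3)
proof (induction b arbitrary: M)
  case 0 then show ?case by simp
next
  case (Suc b)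
  then obtain M' where M: "M = Suc M'" "b \<le> M'" by (cases M) auto
  have "ff q M (Suc b) * qpoch q q (M - Suc b) = (1 - q ^ Suc M') * (ff q M' b * qpoch q q (M' - b))"
    using assms M by (simp add: ff_Suc_Suc)
  also have "\<dots> = qpoch q q M" using Suc.IH[OF M(2)] M by (simp add: qqpoch_Suc)
  finally show ?case .
qed



definition Tm :: "real \<Rightarrow> real \<Rightarrow> nat \<Rightarrow> nat \<Rightarrow> nat \<Rightarrow> real" where
  "Tm q x j m b = ff q j b * ff q m b / qpoch q q b * (-1) ^ b * q ^ tri b / x ^ b"

definition FF :: "real \<Rightarrow> real \<Rightarrow> nat \<Rightarrow> nat \<Rightarrow> real" where
  "FF q x j m = (\<Sum>b\<le>m. Tm q x j m b)"

locale qx =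
  fixes q x :: real
  assumes q0: "0 < q" and q1: "q < 1" and x0: "0 < x"
begin

lemma qn0 [simp]: "q \<noteq> 0" using q0 by simp
lemma xn0 [simp]: "x \<noteq> 0" using x0 by simp
lemma qpow_pos [simp]: "0 < q ^ n" using q0 by simp
lemma qpoch_pos' [simp]: "0 < qpoch q q n" using q0 q1 by (rule qqpoch_pos)
lemma qpoch_nz [simp]: "qpoch q q n \<noteq> 0" using qpoch_pos'[of n] by linarith
lemma one_minus_qpow_nz [simp]: "1 - q ^ Suc n \<noteq> 0"
  using qpow_lt1[OF q0 q1, of "Suc n"] by simp
lemma q_qpow_nz1 [simp]: "q * q ^ n \<noteq> 1"
  using one_minus_qpow_nz[of n] by simp

lemma Tm_0 [simp]: "Tm q x j m 0 = 1" by (simp add: Tm_def qpoch_def)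

lemma Tm_sym: "Tm q x j m b = Tm q x m j b"
  by (simp add: Tm_def)

lemma FF_ext: assumes "m \<le> n" shows "FF q x j m = (\<Sum>b\<le>n. Tm q x j m b)"
  unfolding FF_def
proof (rule sum.mono_neutral_left)
  show "\<forall>i\<in>{..n} - {..m}. Tm q x j m i = 0"
    by (auto simp: Tm_def ff_zero)
qed (use assms in auto)

lemma FF_sym: "FF q x j m = FF q x m j"
proof -
  have "FF q x j m = (\<Sum>b\<le>j+m. Tm q x j m b)" by (rule FF_ext) simp
  also have "\<dots> = (\<Sum>b\<le>m+j. Tm q x m j b)" by (simp add: Tm_sym add.commute)
  also have "\<dots> = FF q x m j" by (rule FF_ext[symmetric]) simp
  finally show ?thesis .
qed

lemma FF_0 [simp]: "FF q x j 0 = 1"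
  by (simp add: FF_def Tm_def qpoch_def)

lemma FF_0' [simp]: "FF q x 0 m = 1"
  using FF_sym[of 0 m] by simp

lemma Tm_step_alg:
  fixes a c P s qb qj qn1 sg T X :: real
  assumes "P \<noteq> 0" "qb \<noteq> 0" "x \<noteq> 0" "X \<noteq> 0" "s = 1 - q * qb" "s \<noteq> 0"
  shows "a * (1 - qj / qb) * ((1 - qn1) * c) / (P * s) * (- sg) * (T * qb) / (x * X)
       - (1 - q * qj) * a * ((1 - qn1) * c) / (P * s) * (- sg) * (T * qb) / (x * X)
       = qj * (1 - qn1) / x * (a * c / P * sg * T / X)"
proof -
  have "a * (1 - qj / qb) * ((1 - qn1) * c) / (P * s) * (- sg) * (T * qb) / (x * X)
       - (1 - q * qj) * a * ((1 - qn1) * c) / (P * s) * (- sg) * (T * qb) / (x * X)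
       = ((1 - qj / qb) - (1 - q * qj)) * qb * (- ((1 - qn1) * a * c * sg * T)) / (P * s * x * X)"
    using assms by (simp add: field_simps)
  also have "((1 - qj / qb) - (1 - q * qj)) * qb = - qj * s"
    using assms(2) unfolding assms(5) by (simp add: field_simps)
  also have "- qj * s * (- ((1 - qn1) * a * c * sg * T)) / (P * s * x * X) = qj * (1 - qn1) * a * c * sg * T / (P * x * X)"
    using assms by (simp add: field_simps)
  also have "\<dots> = qj * (1 - qn1) / x * (a * c / P * sg * T / X)"
    using assms by (simp add: field_simps)
  finally show ?thesis .
qed

lemma Tm_step: "Tm q x j (Suc n) (Suc b) - Tm q x (Suc j) (Suc n) (Suc b) =
    q ^ j * (1 - q ^ Suc n) / x * Tm q x j n b"
proof -
  have e1: "ff q j (Suc b) = ff q j b * (1 - q ^ j / q ^ b)" by (rule ff_Suc)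
  have e2: "ff q (Suc j) (Suc b) = (1 - q * q ^ j) * ff q j b" using ff_Suc_Suc[of q j b] by simp
  have e3: "ff q (Suc n) (Suc b) = (1 - q ^ Suc n) * ff q n b" by (rule ff_Suc_Suc) simp
  have e4: "qpoch q q (Suc b) = qpoch q q b * (1 - q * q ^ b)" using qqpoch_Suc[of q b] by simp
  have e5: "q ^ tri (Suc b) = q ^ tri b * q ^ b" by (simp add: power_add)
  have e6: "x ^ Suc b = x * x ^ b" by simp
  have e7: "(-1::real) ^ Suc b = - ((-1) ^ b)" by simp
  show ?thesis
    unfolding Tm_def e1 e2 e3 e4 e5 e6 e7
    by (rule Tm_step_alg) auto
qed

lemma FF_a: "FF q x j (Suc n) - FF q x (Suc j) (Suc n) = q ^ j * (1 - q ^ Suc n) / x * FF q x j n"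
proof -
  have "FF q x j (Suc n) - FF q x (Suc j) (Suc n) =
      (\<Sum>b\<le>n. Tm q x j (Suc n) (Suc b) - Tm q x (Suc j) (Suc n) (Suc b))"
  proof -
    have "\<And>j. FF q x j (Suc n) = Tm q x j (Suc n) 0 + (\<Sum>b\<le>n. Tm q x j (Suc n) (Suc b))"
      unfolding FF_def by (rule sum.atMost_Suc_shift)
    moreover have "\<And>j. Tm q x j (Suc n) 0 = 1" by (simp add: Tm_def qpoch_def)
    ultimately show ?thesis by (simp add: sum_subtractf)
  qed
  also have "\<dots> = (\<Sum>b\<le>n. q ^ j * (1 - q ^ Suc n) / x * Tm q x j n b)"
    by (simp add: Tm_step)
  also have "\<dots> = q ^ j * (1 - q ^ Suc n) / x * FF q x j n"
    by (simp add: FF_def sum_distrib_left)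
  finally show ?thesis .
qed

lemma FF_b: "FF q x (Suc j) n - FF q x (Suc j) (Suc n) = q ^ n * (1 - q ^ Suc j) / x * FF q x j n"
  using FF_a[of n j] by (simp add: FF_sym)

lemma FF_R_alg:
  fixes U Q F0 F1 F2 G0 G1 :: real
  assumes "F1 - F2 = q * U * (1 - q * Q) / x * G1"
    "F0 - F1 = U * (1 - q * Q) / x * G0"
    "G1 - F1 = Q * (1 - q * U) / x * G0"
  shows "x * F2 = (q * Q + x - q * U) * F1 - (1 - q * U) * (q * Q) * F0"
proof -
  have h1: "x * F2 = x * F1 - q * U * (1 - q * Q) * G1" using assms(1) by (simp add: field_simps)
  have h3: "x * G1 = x * F1 + Q * (1 - q * U) * G0" using assms(3) by (simp add: field_simps)
  have h2: "U * (1 - q * Q) * G0 = x * (F0 - F1)" using assms(2) by (simp add: field_simps)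
  have "x * (x * F2) = x * x * F1 - q * U * (1 - q * Q) * (x * G1)" using h1 by algebra
  also have "\<dots> = x * x * F1 - q * U * (1 - q * Q) * (x * F1) - q * Q * (1 - q * U) * (U * (1 - q * Q) * G0)"
    unfolding h3 by algebra
  also have "\<dots> = x * ((q * Q + x - q * U) * F1 - (1 - q * U) * (q * Q) * F0)"
    unfolding h2 by algebra
  finally show ?thesis by simp
qed

lemma FF_R: "x * FF q x (Suc j) (Suc n) =
   (q ^ Suc n + x - q ^ j) * FF q x j (Suc n) - (1 - q ^ j) * q ^ Suc n * FF q x (j - 1) (Suc n)"
proof (cases j)
  case 0
  then show ?thesis using FF_a[of 0 n] by (simp add: field_simps)
next
  case (Suc i)
  have a1: "FF q x (Suc i) (Suc n) - FF q x (Suc (Suc i)) (Suc n) = q ^ Suc i * (1 - q ^ Suc n) / x * FF q x (Suc i) n"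
    by (rule FF_a)
  have a0: "FF q x i (Suc n) - FF q x (Suc i) (Suc n) = q ^ i * (1 - q ^ Suc n) / x * FF q x i n"
    by (rule FF_a)
  have b0: "FF q x (Suc i) n - FF q x (Suc i) (Suc n) = q ^ n * (1 - q ^ Suc i) / x * FF q x i n"
    by (rule FF_b)
  show ?thesis using FF_R_alg[OF a1[unfolded power_Suc] a0[unfolded power_Suc] b0[unfolded power_Suc]]
    unfolding Suc by (simp add: algebra_simps)
qed

end


definition W :: "real \<Rightarrow> real \<Rightarrow> nat \<Rightarrow> real" where
  "W q y j = y ^ j / qpoch q q j"

definition SS :: "real \<Rightarrow> real \<Rightarrow> (nat \<Rightarrow> real) \<Rightarrow> real" where
  "SS q y f = (\<Sum>j. W q y j * f j)"

definition bdd :: "(nat \<Rightarrow> real) \<Rightarrow> bool" where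
  "bdd f \<longleftrightarrow> (\<exists>B. \<forall>j. \<bar>f j\<bar> \<le> B)"

lemma bdd_const [intro]: "bdd (\<lambda>j. c)"
  unfolding bdd_def by blast

lemma bdd_add [intro]: "bdd f \<Longrightarrow> bdd g \<Longrightarrow> bdd (\<lambda>j. f j + g j)"
  unfolding bdd_def by (metis abs_triangle_ineq add_mono order_trans)

lemma bdd_diff [intro]: "bdd f \<Longrightarrow> bdd g \<Longrightarrow> bdd (\<lambda>j. f j - g j)"
  unfolding bdd_def by (metis abs_triangle_ineq4 add_mono order_trans)

lemma bdd_mult [intro]: "bdd f \<Longrightarrow> bdd g \<Longrightarrow> bdd (\<lambda>j. f j * g j)"
proof -
  assume "bdd f" "bdd g"
  then obtain A B where A: "\<forall>j. \<bar>f j\<bar> \<le> A" and B: "\<forall>j. \<bar>g j\<bar> \<le> B" unfolding bdd_def by blast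
  have "\<bar>f j * g j\<bar> \<le> A * B" for j
    unfolding abs_mult using A B by (intro mult_mono) (auto intro: order_trans[OF abs_ge_zero])
  then show ?thesis unfolding bdd_def by blast
qed

lemma bdd_power [intro]: "bdd f \<Longrightarrow> bdd (\<lambda>j. f j ^ n)"
  by (induction n) (simp_all add: bdd_const bdd_mult)

lemma bdd_shift [intro]: "bdd f \<Longrightarrow> bdd (\<lambda>j. f (Suc j))"
  unfolding bdd_def by blast

lemma bdd_shiftm [intro]: "bdd f \<Longrightarrow> bdd (\<lambda>j. f (j - 1))"
  unfolding bdd_def by blast

lemma ratio_aux:
  fixes s y :: real
  assumes "s < (1 - y) / 2" "0 < s" "0 \<le> y" "y < 1"
  shows "y \<le> (1 + y) / 2 * (1 - s)"
proof -
  have e: "(1 + y) / 2 * (1 - s) - y = (1 - y) / 2 - (1 + y) / 2 * s" by (simp add: field_simps)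
  have "(1 + y) / 2 * s \<le> 1 * s" using assms by (intro mult_right_mono) auto
  then show ?thesis using e assms by linarith
qed

context qx
begin

lemma bdd_qpow [intro]: "bdd (\<lambda>j. q ^ j)"
proof -
  have "\<bar>q ^ j\<bar> \<le> 1" for j using qpow_le1[OF q0 q1, of j] q0 by simp
  then show ?thesis unfolding bdd_def by blast
qed

lemma bdd_FF [intro]: "bdd (\<lambda>j. FF q x j m)"
proof -
  have "\<bar>FF q x j m\<bar> \<le> (\<Sum>b\<le>m. \<bar>1 / qpoch q q b * (-1) ^ b * q ^ tri b / x ^ b\<bar>)" for j
  proof -
    have "\<bar>FF q x j m\<bar> \<le> (\<Sum>b\<le>m. \<bar>Tm q x j m b\<bar>)" unfolding FF_def by (rule sum_abs)
    also have "\<dots> \<le> (\<Sum>b\<le>m. \<bar>1 / qpoch q q b * (-1) ^ b * q ^ tri b / x ^ b\<bar>)"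
    proof (rule sum_mono)
      fix b
      have f1: "\<bar>ff q j b\<bar> \<le> 1" "\<bar>ff q m b\<bar> \<le> 1" using ff_bounds[OF q0 q1] by auto
      have "\<bar>Tm q x j m b\<bar> = \<bar>ff q j b\<bar> * \<bar>ff q m b\<bar> * \<bar>1 / qpoch q q b * (-1) ^ b * q ^ tri b / x ^ b\<bar>"
        unfolding Tm_def by (simp add: abs_mult)
      also have "\<dots> \<le> 1 * 1 * \<bar>1 / qpoch q q b * (-1) ^ b * q ^ tri b / x ^ b\<bar>"
        using f1 by (intro mult_right_mono mult_mono) auto
      finally show "\<bar>Tm q x j m b\<bar> \<le> \<bar>1 / qpoch q q b * (-1) ^ b * q ^ tri b / x ^ b\<bar>" by simp
    qed
    finally show ?thesis .
  qed
  then show ?thesis unfolding bdd_def by blast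
qed

lemma W_nonneg: "0 \<le> y \<Longrightarrow> 0 \<le> W q y j"
  unfolding W_def by (simp add: less_imp_le)

lemma W_Suc: "W q y (Suc j) * (1 - q ^ Suc j) = y * W q y j"
  unfolding W_def qqpoch_Suc by (simp add: field_simps)

lemma summable_W:
  assumes "0 \<le> y" "y < 1"
  shows "summable (W q y)"
proof -
  obtain N where N: "q ^ N < (1 - y) / 2" using real_arch_pow_inv[of "(1 - y) / 2" q] assms q1 by auto
  show ?thesis
  proof (rule summable_ratio_test[of "(1 + y) / 2" N])
    show "(1 + y) / 2 < 1" using assms by simp
    fix n assume "N \<le> n"
    then have "q ^ Suc n \<le> q ^ N" using q0 q1 by (intro power_decreasing) auto
    with N have qs: "q ^ Suc n < (1 - y) / 2" by simp
    have pos: "0 < 1 - q ^ Suc n" using qpow_lt1[OF q0 q1, of "Suc n"] by simp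
    have "W q y (Suc n) = y * W q y n / (1 - q ^ Suc n)"
      using W_Suc[of y n] pos by (simp add: field_simps)
    also have "\<dots> \<le> (1 + y) / 2 * W q y n"
    proof -
      have "y \<le> (1 + y) / 2 * (1 - q ^ Suc n)"
        using ratio_aux[OF qs qpow_pos[of "Suc n"]] assms by simp
      then have "y * W q y n \<le> (1 + y) / 2 * (1 - q ^ Suc n) * W q y n"
        using W_nonneg[OF assms(1)] by (intro mult_right_mono) auto
      then show ?thesis using pos by (simp add: field_simps)
    qed
    finally show "norm (W q y (Suc n)) \<le> (1 + y) / 2 * norm (W q y n)"
      using W_nonneg[OF assms(1)] by simp
  qed
qed

lemma summable_Wf:
  assumes "bdd f" "0 \<le> y" "y < 1"
  shows "summable (\<lambda>j. W q y j * f j)"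
proof -
  obtain B where B: "\<forall>j. \<bar>f j\<bar> \<le> B" using assms(1) unfolding bdd_def by blast
  show ?thesis
  proof (rule summable_comparison_test'[of "\<lambda>j. B * W q y j" 0])
    show "summable (\<lambda>j. B * W q y j)" using summable_W[OF assms(2,3)] by (rule summable_mult)
    fix n
    show "norm (W q y n * f n) \<le> B * W q y n"
      using mult_left_mono[OF spec[OF B, of n] W_nonneg[OF assms(2), of n]] W_nonneg[OF assms(2), of n]
      by (simp add: abs_mult mult.commute)
  qed
qed

lemma sums_SS: "bdd f \<Longrightarrow> 0 \<le> y \<Longrightarrow> y < 1 \<Longrightarrow> (\<lambda>j. W q y j * f j) sums SS q y f"
  unfolding SS_def by (rule summable_sums) (rule summable_Wf)

lemma SS_lin:
  assumes "bdd f" "bdd g" "0 \<le> y" "y < 1"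
  shows "SS q y (\<lambda>j. a * f j + b * g j) = a * SS q y f + b * SS q y g"
proof -
  have "(\<lambda>j. W q y j * (a * f j + b * g j)) sums (a * SS q y f + b * SS q y g)"
  proof -
    have "(\<lambda>j. a * (W q y j * f j) + b * (W q y j * g j)) sums (a * SS q y f + b * SS q y g)"
      by (intro sums_add sums_mult sums_SS assms)
    then show ?thesis by (simp add: algebra_simps)
  qed
  then show ?thesis unfolding SS_def by (rule sums_unique[symmetric])
qed

lemma SS_cmult:
  assumes "bdd f" "0 \<le> y" "y < 1"
  shows "SS q y (\<lambda>j. a * f j) = a * SS q y f"
  using SS_lin[OF assms(1) bdd_const assms(2,3), of a 0 0] by simp

lemma SS_cong: "(\<And>j. f j = g j) \<Longrightarrow> SS q y f = SS q y g"
  by (simp add: SS_def)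

lemma SS_qmult: "SS q y (\<lambda>j. q ^ j * f j) = SS q (q * y) f"
  unfolding SS_def W_def by (simp add: power_mult_distrib field_simps)

lemma SS_shift:
  assumes "bdd h" "0 \<le> y" "y < 1"
  shows "SS q y (\<lambda>j. (1 - q ^ j) * h j) = y * SS q y (\<lambda>j. h (Suc j))"
proof -
  let ?a = "\<lambda>j. W q y j * ((1 - q ^ j) * h j)"
  have sa: "summable ?a" using assms by (intro summable_Wf bdd_mult bdd_diff bdd_const bdd_qpow) auto
  have "(\<Sum>j. ?a (Suc j)) = suminf ?a - ?a 0" by (rule suminf_split_head[OF sa])
  moreover have "?a 0 = 0" by simp
  moreover have aS: "?a (Suc j) = y * (W q y j * h (Suc j))" for j
  proof -
    have "?a (Suc j) = (W q y (Suc j) * (1 - q ^ Suc j)) * h (Suc j)" by (simp only: mult.assoc)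
    also have "\<dots> = y * (W q y j * h (Suc j))" by (simp only: W_Suc mult.assoc)
    finally show ?thesis .
  qed
  ultimately have s1: "suminf ?a = (\<Sum>j. ?a (Suc j))" by linarith
  have "(\<lambda>j. ?a (Suc j)) = (\<lambda>j. y * (W q y j * h (Suc j)))"
    by (rule ext) (rule aS)
  then have "suminf ?a = (\<Sum>j. y * (W q y j * h (Suc j)))" using s1 by simp
  also have "\<dots> = y * SS q y (\<lambda>j. h (Suc j))"
    unfolding SS_def using assms by (intro suminf_mult summable_Wf) auto
  finally show ?thesis unfolding SS_def .
qed

end


context qx
begin

definition EE :: "real \<Rightarrow> real" where
  "EE t = SS q t (\<lambda>j. 1)"

lemma SS_lin3:
  assumes "bdd f" "bdd g" "bdd h" "0 \<le> y" "y < 1"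
  shows "SS q y (\<lambda>j. a * f j + b * g j + c * h j) = a * SS q y f + b * SS q y g + c * SS q y h"
proof -
  have "SS q y (\<lambda>j. a * f j + b * g j + c * h j) = SS q y (\<lambda>j. 1 * (a * f j + b * g j) + c * h j)"
    by simp
  also have "\<dots> = 1 * SS q y (\<lambda>j. a * f j + b * g j) + c * SS q y h"
    using assms by (intro SS_lin) (auto intro!: bdd_add bdd_mult bdd_const)
  also have "SS q y (\<lambda>j. a * f j + b * g j) = a * SS q y f + b * SS q y g"
    using assms by (intro SS_lin) auto
  finally show ?thesis by simp
qed

lemma EE_q:
  assumes "0 \<le> t" "t < 1"
  shows "EE (q * t) = (1 - t) * EE t"
proof -
  have "SS q t (\<lambda>j. (1 - q ^ j) * 1) = t * SS q t (\<lambda>j. 1)"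
    using SS_shift[of "\<lambda>j. 1" t] assms by auto
  moreover have "SS q t (\<lambda>j. (1 - q ^ j) * 1) = 1 * SS q t (\<lambda>j. 1) + (-1) * SS q t (\<lambda>j. q ^ j)"
    using assms by (subst SS_lin[symmetric]) (auto intro: SS_cong)
  moreover have "SS q t (\<lambda>j. q ^ j) = EE (q * t)"
    using SS_qmult[of t "\<lambda>j. 1"] by (simp add: EE_def)
  ultimately show ?thesis by (simp add: EE_def algebra_simps)
qed

lemma EE_iter:
  assumes "0 \<le> t" "t < 1"
  shows "EE (q ^ n * t) = qpoch t q n * EE t"
proof (induction n)
  case 0 then show ?case by (simp add: qpoch_def)
next
  case (Suc n)
  have "q ^ n * t \<le> 1 * t" using assms qpow_le1[OF q0 q1, of n] by (intro mult_right_mono) auto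
  then have lt: "q ^ n * t < 1" using assms by simp
  have "EE (q ^ Suc n * t) = EE (q * (q ^ n * t))" by (simp add: mult.assoc)
  also have "\<dots> = (1 - q ^ n * t) * EE (q ^ n * t)"
  proof (rule EE_q)
    show "0 \<le> q ^ n * t" using assms q0 by (intro mult_nonneg_nonneg zero_le_power) auto
  qed (rule lt)
  finally show ?case using Suc by (simp add: qpoch_Suc algebra_simps)
qed

lemma EE_ge1:
  assumes "0 \<le> t" "t < 1"
  shows "1 \<le> EE t"
proof -
  have "sum (\<lambda>j. W q t j * 1) {0} \<le> (\<Sum>j. W q t j * 1)"
    using summable_W[OF assms] W_nonneg[OF assms(1)] by (intro sum_le_suminf) auto
  then show ?thesis by (simp add: EE_def SS_def W_def qpoch_def)
qed

lemma EE_powser: "EE t = (\<Sum>j. inverse (qpoch q q j) * t ^ j)"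
  unfolding EE_def SS_def W_def by (simp add: field_simps)

lemma EE_lim:
  assumes "0 \<le> t" "t < 1"
  shows "(\<lambda>n. EE (q ^ n * t)) \<longlonglongrightarrow> 1"
proof -
  have summ: "summable (\<lambda>j. inverse (qpoch q q j) * (1/2) ^ j)"
    using summable_W[of "1/2"] unfolding W_def by (simp add: field_simps)
  have cont: "isCont (\<lambda>s. \<Sum>j. inverse (qpoch q q j) * s ^ j) 0"
    by (rule isCont_powser[OF summ]) simp
  have lim0: "(\<lambda>n. q ^ n * t) \<longlonglongrightarrow> 0"
    using LIMSEQ_power_zero[of q] q0 q1 by (auto intro: tendsto_mult_left_zero)
  have "(\<lambda>n. \<Sum>j. inverse (qpoch q q j) * (q ^ n * t) ^ j) \<longlonglongrightarrow> (\<Sum>j. inverse (qpoch q q j) * 0 ^ j)"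
    by (rule isCont_tendsto_compose[OF cont lim0])
  moreover have "(\<Sum>j. inverse (qpoch q q j) * (0::real) ^ j) = 1"
    using powser_zero[of "\<lambda>j. inverse (qpoch q q j)"] by (simp add: qpoch_def)
  ultimately show ?thesis by (simp add: EE_powser)
qed

lemma qpoch_inf_EE:
  assumes "0 \<le> t" "t < 1"
  shows "qpoch_inf t q = 1 / EE t"
proof -
  have pos: "0 < EE t" using EE_ge1[OF assms] by simp
  have "(\<lambda>n. EE (q ^ n * t) / EE t) \<longlonglongrightarrow> 1 / EE t"
    by (intro tendsto_divide EE_lim assms tendsto_const) (use pos in simp)
  moreover have "EE (q ^ n * t) / EE t = (\<Prod>k<n. 1 - t * q ^ k)" for n
    using EE_iter[OF assms, of n] pos by (simp add: qpoch_def)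
  ultimately have "(\<lambda>n. \<Prod>k<n. 1 - t * q ^ k) \<longlonglongrightarrow> 1 / EE t" by simp
  then show ?thesis unfolding qpoch_inf_def
    by (rule prodinf_eq_prod_lim') (use pos in simp)
qed

end


lemma alg_B:
  fixes A B P D0 B' Q x y :: real
  assumes x: "x > 0" and Q1: "Q \<noteq> 1" and Q0: "Q > 0" and Qy: "Q * y = x"
    and h1: "x * P = (Q + x) * A - B - Q * (y * P)"
    and h2: "A - B = y * D0"
    and h3: "D0 - 2 * P + A = ((1 - Q) / x)^2 * B'"
  shows "B = (1 - Q) / x * B'"
proof -
  have y: "y = x / Q" using Qy Q0 by (simp add: field_simps)
  have P: "2 * x * P = (Q + x) * A - B" using h1 Qy by (simp add: algebra_simps)
  have D: "x * D0 = Q * (A - B)" using h2 y Q0 by (simp add: field_simps)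
  have "x * (D0 - 2 * P + A) = Q * (A - B) - ((Q + x) * A - B) + x * A"
    using P D by (simp add: algebra_simps)
  also have "\<dots> = B * (1 - Q)" by (simp add: algebra_simps)
  finally have "B * (1 - Q) = x * (((1 - Q) / x)^2 * B')" using h3 by simp
  also have "\<dots> = (1 - Q) * ((1 - Q) / x * B')" using x by (simp add: power2_eq_square field_simps)
  finally have "(1 - Q) * (B - (1 - Q) / x * B') = 0" by (simp add: algebra_simps)
  then show ?thesis using Q1 by simp
qed

lemma alg_A:
  fixes A B P Z A' B' Q R q x y :: real
  assumes x: "x > 0" and Q1: "Q \<noteq> 1" and R0: "R > 0" and q0: "q > 0" and QR: "Q = q * R"
    and Qy: "Q * y = x"
    and hB: "B = (1 - Q) / x * B'"
    and P: "2 * x * P = (Q + x) * A - B"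
    and h5: "Z = x / (1 - Q) * (A - P)"
    and h6: "A' - 2 * Z + B = y * (q * (R / x)^2 * (A' - q * B'))"
  shows "(Q - x) * A = (1 - Q) * (R - x) / x * A'"
proof -
  have Q0: "Q > 0" using QR q0 R0 by simp
  have nzQ: "1 - Q \<noteq> 0" using Q1 by simp
  have yq: "y * (q * (R / x)^2) = R / x" using Qy QR x R0 q0 by (simp add: field_simps power2_eq_square)
  have B'0: "B' = B * x / (1 - Q)"
  proof -
    have "1 - Q \<noteq> 0" using Q1 by simp
    then show ?thesis using hB x by (simp add: field_simps)
  qed
  have B': "q * B' = Q * B * x / ((1 - Q) * R)"
    unfolding B'0 QR using R0 by simp
  have Z2: "2 * Z = ((x - Q) * A + B) / (1 - Q)"
    using h5 P Q1 by (simp add: field_simps)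
  have "y * (q * (R / x)^2 * (A' - q * B')) = (y * (q * (R / x)^2)) * (A' - q * B')" by (simp only: mult.assoc)
  then have h6': "A' - 2 * Z + B = R / x * (A' - q * B')" using h6 yq by simp
  have "A' - ((x - Q) * A + B) / (1 - Q) + B = R / x * (A' - Q * B * x / ((1 - Q) * R))"
    using h6' unfolding Z2 B' .
  also have "R / x * (A' - Q * B * x / ((1 - Q) * R)) = R / x * A' - Q * B / (1 - Q)"
  proof -
    have "1 - Q \<noteq> 0" using Q1 by simp
    then show ?thesis using x R0 by (simp add: field_simps)
  qed
  finally have e: "A' - ((x - Q) * A + B) / (1 - Q) + B = R / x * A' - Q * B / (1 - Q)" .
  have "(1 - Q) * (A' - ((x - Q) * A + B) / (1 - Q) + B) = (1 - Q) * A' - (x - Q) * A - Q * B"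
    using Q1 by (simp add: field_simps)
  moreover have "(1 - Q) * (R / x * A' - Q * B / (1 - Q)) = (1 - Q) * R / x * A' - Q * B"
    using nzQ x by (simp add: field_simps)
  ultimately have "(1 - Q) * A' - (x - Q) * A - Q * B = (1 - Q) * R / x * A' - Q * B"
    using e by simp
  then have "(Q - x) * A = (1 - Q) * R / x * A' - (1 - Q) * A'" by (simp add: algebra_simps)
  also have "\<dots> = (1 - Q) * (R - x) / x * A'" using x by (simp add: field_simps)
  finally show ?thesis .
qed

lemma alg_C:
  fixes B C P1 D1 C' Q R q x y :: real
  assumes x: "x > 0" and R0: "R > 0" and q0: "q > 0" and QR: "Q = q * R"
    and Qy: "Q * y = x"
    and h3: "x * P1 = (Q + x) * B - C - Q * (y * (q * P1))"
    and h4: "B - C = y * (q * D1)"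
    and h4b: "D1 - 2 * P1 + B = ((1 - Q) / x)^2 * C'"
  shows "(2 - (1 + q) * R) * C = (1 + q) * (1 - Q)^2 / x * C' - (1 - q) * (R - x) * B"
proof -
  have yq: "y * q = x / R" using Qy QR R0 q0 by (simp add: field_simps)
  have "Q * (y * (q * P1)) = (Q * y) * q * P1" by (simp add: algebra_simps)
  also have "\<dots> = x * q * P1" by (simp only: Qy)
  finally have e: "Q * (y * (q * P1)) = x * q * P1" .
  have P1: "(1 + q) * x * P1 = (Q + x) * B - C" using h3 unfolding e by (simp add: algebra_simps)
  have D1: "x * D1 = R * (B - C)" using h4 yq x R0 by (simp add: field_simps)
  have "x * (1 + q) * (D1 - 2 * P1 + B) = (1 + q) * (x * D1) - 2 * ((1 + q) * x * P1) + (1 + q) * x * B"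
    by (simp add: algebra_simps)
  also have "\<dots> = (1 + q) * (R * (B - C)) - 2 * ((Q + x) * B - C) + (1 + q) * x * B"
    unfolding P1 D1 ..
  also have "\<dots> = (1 + q) * R * (B - C) - 2 * ((Q + x) * B - C) + (1 + q) * x * B"
    by (simp add: algebra_simps)
  also have "\<dots> = (2 - (1 + q) * R) * C + (1 - q) * (R - x) * B"
    using QR by (simp add: algebra_simps)
  finally have "(2 - (1 + q) * R) * C + (1 - q) * (R - x) * B = x * (1 + q) * (((1 - Q) / x)^2 * C')"
    using h4b by simp
  also have "\<dots> = (1 + q) * (1 - Q)^2 / x * C'" using x by (simp add: field_simps power2_eq_square)
  finally show ?thesis by simp
qed



context qx
begin

definition yy :: "nat \<Rightarrow> real" where "yy m = x / q ^ m"
definition Am :: "nat \<Rightarrow> real" where "Am m = SS q (yy m) (\<lambda>j. FF q x j m ^ 2)"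
definition Bm :: "nat \<Rightarrow> real" where "Bm m = SS q (yy m) (\<lambda>j. q ^ j * FF q x j m ^ 2)"
definition Cm :: "nat \<Rightarrow> real" where "Cm m = SS q (yy m) (\<lambda>j. q ^ j * (q ^ j * FF q x j m ^ 2))"

lemma yy_Suc: "q * yy (Suc n) = yy n"
  unfolding yy_def by (simp add: field_simps)

lemma yy_pos: "0 < yy m" unfolding yy_def using x0 by simp

lemma yy_lt1: "x < q ^ m \<Longrightarrow> yy m < 1" unfolding yy_def by simp

lemma bdd_FF_Suc [intro]: "bdd (\<lambda>j. FF q x (Suc j) m)"
  using bdd_shift[OF bdd_FF[of m]] .

lemma bdd_FF_pred [intro]: "bdd (\<lambda>j. FF q x (j - 1) m)"
  using bdd_shiftm[OF bdd_FF[of m]] .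

lemmas bddI = bdd_add bdd_diff bdd_mult bdd_power bdd_const bdd_qpow bdd_FF bdd_FF_Suc bdd_FF_pred

lemma rels:
  assumes xq: "x < q ^ Suc n"
  shows "Bm (Suc n) = (1 - q ^ Suc n) / x * Bm n"
    and "(q ^ Suc n - x) * Am (Suc n) = (1 - q ^ Suc n) * (q ^ n - x) / x * Am n"
    and "(2 - (1 + q) * q ^ n) * Cm (Suc n) = (1 + q) * (1 - q ^ Suc n)^2 / x * Cm n - (1 - q) * (q ^ n - x) * Bm (Suc n)"
proof -
  define y where "y = yy (Suc n)"
  define Q where "Q = q ^ Suc n"
  define F where "F = (\<lambda>j. FF q x j (Suc n))"
  define G where "G = (\<lambda>j. FF q x j n)"
  have y0: "0 \<le> y" and y1: "y < 1" using yy_pos yy_lt1[OF xq] unfolding y_def by (auto simp: less_imp_le)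
  have Qy: "Q * y = x" unfolding Q_def y_def yy_def by simp
  have Q1: "Q \<noteq> 1" unfolding Q_def using one_minus_qpow_nz[of n] by simp
  have QR: "Q = q * q ^ n" unfolding Q_def by simp
  have Q0: "Q > 0" unfolding Q_def by (rule qpow_pos)
  have bF: "bdd F" "bdd (\<lambda>j. F (Suc j))" "bdd (\<lambda>j. F (j - 1))"
    unfolding F_def by (rule bdd_FF, rule bdd_FF_Suc, rule bdd_FF_pred)
  have bG: "bdd G" "bdd (\<lambda>j. G (j - 1))" unfolding G_def by (rule bdd_FF, rule bdd_FF_pred)
  have bS: "bdd (\<lambda>j. F (j - Suc 0))" "bdd (\<lambda>j. G (j - Suc 0))" using bF(3) bG(2) by simp_all
  note bb = bF bG bS bddI
  define A where "A = SS q y (\<lambda>j. F j ^ 2)"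
  define B where "B = SS q y (\<lambda>j. q ^ j * F j ^ 2)"
  define C where "C = SS q y (\<lambda>j. q ^ j * (q ^ j * F j ^ 2))"
  define P where "P = SS q y (\<lambda>j. F j * F (Suc j))"
  define P1 where "P1 = SS q y (\<lambda>j. q ^ j * (F j * F (Suc j)))"
  define D0 where "D0 = SS q y (\<lambda>j. F (Suc j) ^ 2)"
  define D1 where "D1 = SS q y (\<lambda>j. q ^ j * F (Suc j) ^ 2)"
  define Z where "Z = SS q y (\<lambda>j. q ^ j * (F j * G j))"
  have A_eq: "Am (Suc n) = A" unfolding Am_def A_def F_def y_def ..
  have B_eq: "Bm (Suc n) = B" unfolding Bm_def B_def F_def y_def ..
  have C_eq: "Cm (Suc n) = C" unfolding Cm_def C_def F_def y_def ..
  have A'_eq: "SS q y (\<lambda>j. q ^ j * G j ^ 2) = Am n"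
    unfolding Am_def G_def SS_qmult y_def yy_Suc ..
  have B'_eq: "SS q y (\<lambda>j. q ^ j * (q ^ j * G j ^ 2)) = Bm n"
    unfolding Bm_def G_def SS_qmult y_def yy_Suc ..
  have C'_eq: "SS q y (\<lambda>j. q ^ j * (q ^ j * (q ^ j * G j ^ 2))) = Cm n"
    unfolding Cm_def G_def SS_qmult y_def yy_Suc ..
  have pR: "x * F (Suc j) = (Q + x - q ^ j) * F j - (1 - q ^ j) * Q * F (j - 1)" for j
    unfolding F_def Q_def by (rule FF_R)
  have pa: "F j - F (Suc j) = q ^ j * (1 - Q) / x * G j" for j
    unfolding F_def G_def Q_def by (rule FF_a)
  have pb: "G (Suc j) - F (Suc j) = q ^ n * (1 - q ^ Suc j) / x * G j" for j
    unfolding F_def G_def by (rule FF_b)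
  have E1: "x * P = (Q + x) * A - B - Q * (y * P)"
  proof -
    have "x * P = SS q y (\<lambda>j. x * (F j * F (Suc j)))"
      unfolding P_def using bb y0 y1 by (subst SS_cmult) auto
    also have "\<dots> = SS q y (\<lambda>j. (Q + x) * F j ^ 2 + (-1) * (q ^ j * F j ^ 2) + (- Q) * ((1 - q ^ j) * (F (j - 1) * F j)))"
    proof (rule SS_cong)
      fix j
      have "x * (F j * F (Suc j)) = F j * (x * F (Suc j))" by simp
      also have "\<dots> = F j * ((Q + x - q ^ j) * F j - (1 - q ^ j) * Q * F (j - 1))" by (simp only: pR)
      finally show "x * (F j * F (Suc j)) = (Q + x) * F j ^ 2 + (-1) * (q ^ j * F j ^ 2) + (- Q) * ((1 - q ^ j) * (F (j - 1) * F j))"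
        by (simp add: algebra_simps power2_eq_square)
    qed
    also have "\<dots> = (Q + x) * A + (-1) * B + (- Q) * SS q y (\<lambda>j. (1 - q ^ j) * (F (j - 1) * F j))"
      unfolding A_def B_def using y0 y1 by (intro SS_lin3) (auto intro!: bb)
    also have "SS q y (\<lambda>j. (1 - q ^ j) * (F (j - 1) * F j)) = y * P"
      unfolding P_def using y0 y1 by (subst SS_shift) (auto intro!: bb)
    finally show ?thesis by simp
  qed
  have E2: "A - B = y * D0"
  proof -
    have "A - B = 1 * A + (-1) * B" by simp
    also have "\<dots> = SS q y (\<lambda>j. 1 * F j ^ 2 + (-1) * (q ^ j * F j ^ 2))"
      unfolding A_def B_def using y0 y1 by (intro SS_lin[symmetric]) (auto intro!: bb)
    also have "\<dots> = SS q y (\<lambda>j. (1 - q ^ j) * F j ^ 2)"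
      by (rule SS_cong) (simp add: algebra_simps)
    also have "\<dots> = y * D0"
      unfolding D0_def using y0 y1 by (subst SS_shift) (auto intro!: bb)
    finally show ?thesis .
  qed
  have E2b: "D0 - 2 * P + A = ((1 - Q) / x)^2 * SS q y (\<lambda>j. q ^ j * (q ^ j * G j ^ 2))"
  proof -
    have "D0 - 2 * P + A = SS q y (\<lambda>j. 1 * F (Suc j) ^ 2 + (-2) * (F j * F (Suc j)) + 1 * F j ^ 2)"
      unfolding D0_def P_def A_def using y0 y1 by (subst SS_lin3) (auto intro!: bb)
    also have "\<dots> = SS q y (\<lambda>j. ((1 - Q) / x)^2 * (q ^ j * (q ^ j * G j ^ 2)))"
    proof (rule SS_cong)
      fix j
      have "1 * F (Suc j) ^ 2 + (-2) * (F j * F (Suc j)) + 1 * F j ^ 2 = (F j - F (Suc j))^2"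
        by (simp add: algebra_simps power2_eq_square)
      also have "\<dots> = ((1 - Q) / x)^2 * (q ^ j * (q ^ j * G j ^ 2))"
        unfolding pa by (simp add: power2_eq_square algebra_simps)
      finally show "1 * F (Suc j) ^ 2 + (-2) * (F j * F (Suc j)) + 1 * F j ^ 2 = ((1 - Q) / x)^2 * (q ^ j * (q ^ j * G j ^ 2))" .
    qed
    also have "\<dots> = ((1 - Q) / x)^2 * SS q y (\<lambda>j. q ^ j * (q ^ j * G j ^ 2))"
      using y0 y1 by (intro SS_cmult) (auto intro!: bb)
    finally show ?thesis .
  qed
  have resB: "B = (1 - Q) / x * Bm n"
    using alg_B[OF x0 Q1 Q0 Qy E1 E2 E2b[unfolded B'_eq]] .
  then show "Bm (Suc n) = (1 - q ^ Suc n) / x * Bm n" using B_eq Q_def by simp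
  have E3: "x * P1 = (Q + x) * B - C - Q * (y * (q * P1))"
  proof -
    have "x * P1 = SS q y (\<lambda>j. x * (q ^ j * (F j * F (Suc j))))"
      unfolding P1_def using bb y0 y1 by (subst SS_cmult) (auto intro!: bb)
    also have "\<dots> = SS q y (\<lambda>j. (Q + x) * (q ^ j * F j ^ 2) + (-1) * (q ^ j * (q ^ j * F j ^ 2)) + (- Q) * ((1 - q ^ j) * (q ^ j * (F (j - 1) * F j))))"
    proof (rule SS_cong)
      fix j
      have "x * (q ^ j * (F j * F (Suc j))) = q ^ j * F j * (x * F (Suc j))" by simp
      also have "\<dots> = q ^ j * F j * ((Q + x - q ^ j) * F j - (1 - q ^ j) * Q * F (j - 1))" by (simp only: pR)
      finally show "x * (q ^ j * (F j * F (Suc j))) = (Q + x) * (q ^ j * F j ^ 2) + (-1) * (q ^ j * (q ^ j * F j ^ 2)) + (- Q) * ((1 - q ^ j) * (q ^ j * (F (j - 1) * F j)))"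
        by (simp add: algebra_simps power2_eq_square)
    qed
    also have "\<dots> = (Q + x) * B + (-1) * C + (- Q) * SS q y (\<lambda>j. (1 - q ^ j) * (q ^ j * (F (j - 1) * F j)))"
      unfolding B_def C_def using y0 y1 by (intro SS_lin3) (auto intro!: bb)
    also have "SS q y (\<lambda>j. (1 - q ^ j) * (q ^ j * (F (j - 1) * F j))) = y * SS q y (\<lambda>j. q * (q ^ j * (F j * F (Suc j))))"
      using y0 y1 by (subst SS_shift) (auto intro!: bb simp: mult.assoc)
    also have "SS q y (\<lambda>j. q * (q ^ j * (F j * F (Suc j)))) = q * P1"
      unfolding P1_def using y0 y1 by (intro SS_cmult) (auto intro!: bb)
    finally show ?thesis by simp
  qed
  have E4: "B - C = y * (q * D1)"
  proof -
    have "B - C = 1 * B + (-1) * C" by simp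
    also have "\<dots> = SS q y (\<lambda>j. 1 * (q ^ j * F j ^ 2) + (-1) * (q ^ j * (q ^ j * F j ^ 2)))"
      unfolding B_def C_def using y0 y1 by (intro SS_lin[symmetric]) (auto intro!: bb)
    also have "\<dots> = SS q y (\<lambda>j. (1 - q ^ j) * (q ^ j * F j ^ 2))"
      by (rule SS_cong) (simp add: algebra_simps)
    also have "\<dots> = y * SS q y (\<lambda>j. q * (q ^ j * F (Suc j) ^ 2))"
      using y0 y1 by (subst SS_shift) (auto intro!: bb simp: mult.assoc)
    also have "SS q y (\<lambda>j. q * (q ^ j * F (Suc j) ^ 2)) = q * D1"
      unfolding D1_def using y0 y1 by (intro SS_cmult) (auto intro!: bb)
    finally show ?thesis .
  qed
  have E4b: "D1 - 2 * P1 + B = ((1 - Q) / x)^2 * SS q y (\<lambda>j. q ^ j * (q ^ j * (q ^ j * G j ^ 2)))"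
  proof -
    have "D1 - 2 * P1 + B = SS q y (\<lambda>j. 1 * (q ^ j * F (Suc j) ^ 2) + (-2) * (q ^ j * (F j * F (Suc j))) + 1 * (q ^ j * F j ^ 2))"
      unfolding D1_def P1_def B_def using y0 y1 by (subst SS_lin3) (auto intro!: bb)
    also have "\<dots> = SS q y (\<lambda>j. ((1 - Q) / x)^2 * (q ^ j * (q ^ j * (q ^ j * G j ^ 2))))"
    proof (rule SS_cong)
      fix j
      have "1 * (q ^ j * F (Suc j) ^ 2) + (-2) * (q ^ j * (F j * F (Suc j))) + 1 * (q ^ j * F j ^ 2) = q ^ j * (F j - F (Suc j))^2"
        by (simp add: algebra_simps power2_eq_square)
      also have "\<dots> = ((1 - Q) / x)^2 * (q ^ j * (q ^ j * (q ^ j * G j ^ 2)))"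
        unfolding pa by (simp add: power2_eq_square algebra_simps)
      finally show "1 * (q ^ j * F (Suc j) ^ 2) + (-2) * (q ^ j * (F j * F (Suc j))) + 1 * (q ^ j * F j ^ 2) = ((1 - Q) / x)^2 * (q ^ j * (q ^ j * (q ^ j * G j ^ 2)))" .
    qed
    also have "\<dots> = ((1 - Q) / x)^2 * SS q y (\<lambda>j. q ^ j * (q ^ j * (q ^ j * G j ^ 2)))"
      using y0 y1 by (intro SS_cmult) (auto intro!: bb)
    finally show ?thesis .
  qed
  have resC: "(2 - (1 + q) * q ^ n) * C = (1 + q) * (1 - Q)^2 / x * Cm n - (1 - q) * (q ^ n - x) * B"
    using alg_C[OF x0 _ q0 QR Qy E3 E4 E4b[unfolded C'_eq]] by simp
  then show "(2 - (1 + q) * q ^ n) * Cm (Suc n) = (1 + q) * (1 - q ^ Suc n)^2 / x * Cm n - (1 - q) * (q ^ n - x) * Bm (Suc n)"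
    using B_eq C_eq Q_def by simp
  have E5: "Z = x / (1 - Q) * (A - P)"
  proof -
    have nz: "1 - Q \<noteq> 0" using Q1 by simp
    have "Z = SS q y (\<lambda>j. x / (1 - Q) * (1 * F j ^ 2 + (-1) * (F j * F (Suc j))))"
      unfolding Z_def
    proof (rule SS_cong)
      fix j
      have "q ^ j * G j = x / (1 - Q) * (F j - F (Suc j))"
        unfolding pa using nz by (simp add: field_simps)
      have "q ^ j * (F j * G j) = F j * (q ^ j * G j)" by simp
      also have "\<dots> = F j * (x / (1 - Q) * (F j - F (Suc j)))" unfolding \<open>q ^ j * G j = _\<close> ..
      also have "\<dots> = x / (1 - Q) * (1 * F j ^ 2 + (-1) * (F j * F (Suc j)))"
        by (simp add: algebra_simps power2_eq_square)
      finally show "q ^ j * (F j * G j) = x / (1 - Q) * (1 * F j ^ 2 + (-1) * (F j * F (Suc j)))" .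
    qed
    also have "\<dots> = x / (1 - Q) * SS q y (\<lambda>j. 1 * F j ^ 2 + (-1) * (F j * F (Suc j)))"
      using y0 y1 by (intro SS_cmult) (auto intro!: bb)
    also have "SS q y (\<lambda>j. 1 * F j ^ 2 + (-1) * (F j * F (Suc j))) = A - P"
      unfolding A_def P_def using y0 y1 by (subst SS_lin) (auto intro!: bb)
    finally show ?thesis .
  qed
  have E6: "Am n - 2 * Z + B = y * (q * (q ^ n / x)^2 * (Am n - q * Bm n))"
  proof -
    have "Am n - 2 * Z + B = SS q y (\<lambda>j. 1 * (q ^ j * G j ^ 2) + (-2) * (q ^ j * (F j * G j)) + 1 * (q ^ j * F j ^ 2))"
      unfolding A'_eq[symmetric] Z_def B_def using y0 y1 by (subst SS_lin3) (auto intro!: bb)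
    also have "\<dots> = SS q y (\<lambda>j. (1 - q ^ j) * (q ^ j * (q ^ n / x)^2 * (1 - q ^ j) * G (j - 1) ^ 2))"
    proof (rule SS_cong)
      fix j
      show "1 * (q ^ j * G j ^ 2) + (-2) * (q ^ j * (F j * G j)) + 1 * (q ^ j * F j ^ 2) =
            (1 - q ^ j) * (q ^ j * (q ^ n / x)^2 * (1 - q ^ j) * G (j - 1) ^ 2)"
      proof (cases j)
        case 0
        then show ?thesis unfolding F_def G_def by simp
      next
        case (Suc i)
        have "1 * (q ^ j * G j ^ 2) + (-2) * (q ^ j * (F j * G j)) + 1 * (q ^ j * F j ^ 2) = q ^ j * (G (Suc i) - F (Suc i))^2"
          unfolding Suc by (simp add: algebra_simps power2_eq_square)
        also have "\<dots> = (1 - q ^ j) * (q ^ j * (q ^ n / x)^2 * (1 - q ^ j) * G (j - 1) ^ 2)"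
          unfolding pb Suc by (simp add: power2_eq_square algebra_simps)
        finally show ?thesis .
      qed
    qed
    also have "\<dots> = y * SS q y (\<lambda>j. q * (q ^ n / x)^2 * (1 * (q ^ j * G j ^ 2) + (- q) * (q ^ j * (q ^ j * G j ^ 2))))"
      using y0 y1 by (subst SS_shift) (auto intro!: bb SS_cong simp: algebra_simps)
    also have "SS q y (\<lambda>j. q * (q ^ n / x)^2 * (1 * (q ^ j * G j ^ 2) + (- q) * (q ^ j * (q ^ j * G j ^ 2))))
        = q * (q ^ n / x)^2 * (1 * Am n + (- q) * Bm n)"
    proof -
      have "SS q y (\<lambda>j. q * (q ^ n / x)^2 * (1 * (q ^ j * G j ^ 2) + (- q) * (q ^ j * (q ^ j * G j ^ 2))))
          = q * (q ^ n / x)^2 * SS q y (\<lambda>j. 1 * (q ^ j * G j ^ 2) + (- q) * (q ^ j * (q ^ j * G j ^ 2)))"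
        using y0 y1 by (intro SS_cmult) (auto intro!: bb)
      also have "SS q y (\<lambda>j. 1 * (q ^ j * G j ^ 2) + (- q) * (q ^ j * (q ^ j * G j ^ 2)))
          = 1 * SS q y (\<lambda>j. q ^ j * G j ^ 2) + (- q) * SS q y (\<lambda>j. q ^ j * (q ^ j * G j ^ 2))"
        using y0 y1 by (intro SS_lin) (auto intro!: bb)
      finally show ?thesis unfolding A'_eq B'_eq .
    qed
    finally show ?thesis by simp
  qed
  have "(Q - x) * A = (1 - Q) * (q ^ n - x) / x * Am n"
    using alg_A[OF x0 Q1 _ q0 QR Qy resB _ E5 E6] E1 Qy by (simp add: algebra_simps)
  then show "(q ^ Suc n - x) * Am (Suc n) = (1 - q ^ Suc n) * (q ^ n - x) / x * Am n"
    using A_eq Q_def by simp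
qed

end


lemma poly_C:
  fixes q R x :: real
  shows "(2 - (1 + q) * R) * (q * R + x - (1 + q) * (q * R) * x) =
         (1 + q) * (1 - q * R) * (R + x - (1 + q) * R * x) - (1 - q) * (R - x)"
  by (simp add: algebra_simps)

context qx
begin

definition cA :: "nat \<Rightarrow> real" where "cA m = qpoch q q m / x ^ m * (1 - x) / (q ^ m - x) * EE x"
definition cB :: "nat \<Rightarrow> real" where "cB m = qpoch q q m / x ^ m * (1 - x) * EE x"
definition cC :: "nat \<Rightarrow> real" where
  "cC m = qpoch q q m / x ^ m * (1 - x) * (q ^ m + x - (1 + q) * q ^ m * x) * EE x"

lemma closed_forms:
  assumes "x < q ^ m"
  shows "Am m = cA m \<and> Bm m = cB m \<and> Cm m = cC m"
  using assms
proof (induction m)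
  case 0
  then have x1: "x < 1" by simp
  have x00: "0 \<le> x" using x0 by simp
  have "q * x < 1 * x" using q1 x0 by (intro mult_strict_right_mono) auto
  then have qx1: "q * x < 1" using x1 by simp
  have A: "Am 0 = EE x" unfolding Am_def EE_def yy_def by simp
  have "Bm 0 = SS q x (\<lambda>j. q ^ j * 1)" unfolding Bm_def yy_def by simp
  also have "\<dots> = EE (q * x)" unfolding SS_qmult EE_def ..
  also have "\<dots> = (1 - x) * EE x" using x00 x1 by (rule EE_q)
  finally have B: "Bm 0 = (1 - x) * EE x" .
  have "Cm 0 = SS q x (\<lambda>j. q ^ j * (q ^ j * 1))" unfolding Cm_def yy_def by simp
  also have "\<dots> = SS q (q * x) (\<lambda>j. q ^ j * 1)" unfolding SS_qmult ..
  also have "\<dots> = EE (q * (q * x))" unfolding SS_qmult EE_def ..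
  also have "\<dots> = (1 - q * x) * EE (q * x)" using x00 q0 qx1 by (intro EE_q) auto
  also have "\<dots> = (1 - q * x) * ((1 - x) * EE x)" using x00 x1 by (simp add: EE_q)
  finally have C: "Cm 0 = (1 - q * x) * ((1 - x) * EE x)" .
  show ?case using A B C x1 by (simp add: cA_def cB_def cC_def qpoch_def algebra_simps)
next
  case (Suc n)
  have "q ^ Suc n \<le> q ^ n" using q0 q1 by (intro power_decreasing) auto
  then have xn: "x < q ^ n" using Suc.prems by linarith
  note IH = Suc.IH[OF xn]
  note R = rels[OF Suc.prems]
  have pos1: "0 < q ^ Suc n - x" using Suc.prems by simp
  have pos0: "0 < q ^ n - x" using xn by simp
  have B: "Bm (Suc n) = cB (Suc n)"
    using R(1) IH unfolding cB_def by (simp add: qqpoch_Suc field_simps)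
  have A: "Am (Suc n) = cA (Suc n)"
  proof -
    have "(q ^ Suc n - x) * Am (Suc n) = (1 - q ^ Suc n) * (q ^ n - x) / x * cA n"
      using R(2) IH by simp
    also have "\<dots> = (q ^ Suc n - x) * cA (Suc n)"
      unfolding cA_def using pos1 pos0 by (simp add: qqpoch_Suc field_simps)
    finally show ?thesis using pos1 by simp
  qed
  have C: "Cm (Suc n) = cC (Suc n)"
  proof -
    have qn1: "q ^ n \<le> 1" using qpow_le1[OF q0 q1] .
    have "(1 + q) * q ^ n \<le> (1 + q) * 1" using qn1 q0 by (intro mult_left_mono) auto
    then have d: "0 < 2 - (1 + q) * q ^ n" using q1 by simp
    define K where "K = qpoch q q n / x ^ n * (1 - x) * EE x"
    have cBS: "cB (Suc n) = K * ((1 - q ^ Suc n) / x)" unfolding cB_def K_def by (simp add: qqpoch_Suc field_simps)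
    have cCS: "cC (Suc n) = K * ((1 - q ^ Suc n) / x) * (q * q ^ n + x - (1 + q) * (q * q ^ n) * x)"
      unfolding cC_def K_def by (simp add: qqpoch_Suc field_simps)
    have cCn: "cC n = K * (q ^ n + x - (1 + q) * q ^ n * x)" unfolding cC_def K_def by simp
    have "(2 - (1 + q) * q ^ n) * Cm (Suc n) = (1 + q) * (1 - q ^ Suc n)^2 / x * cC n - (1 - q) * (q ^ n - x) * cB (Suc n)"
      using R(3) IH B by simp
    also have "\<dots> = K * ((1 - q ^ Suc n) / x) * ((1 + q) * (1 - q * q ^ n) * (q ^ n + x - (1 + q) * q ^ n * x) - (1 - q) * (q ^ n - x))"
      unfolding cBS cCn by (simp add: power2_eq_square divide_inverse algebra_simps)
    also have "\<dots> = K * ((1 - q ^ Suc n) / x) * ((2 - (1 + q) * q ^ n) * (q * q ^ n + x - (1 + q) * (q * q ^ n) * x))"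
      unfolding poly_C ..
    also have "\<dots> = (2 - (1 + q) * q ^ n) * cC (Suc n)" unfolding cCS by (simp only: mult_ac)
    finally show ?thesis using d by simp
  qed
  show ?case using A B C by simp
qed

end


lemma tri_id: "tri k + k + tri (k + r) = tri r + (k + r) * k"
  using tri_add[of k r] tri_double[of k] by (simp add: algebra_simps)

lemma term_alg:
  fixes Pall Ps Psk Pk Pr Pkr X FM Fk Fr T Qnk Tn Tr sk sr x qk :: real
  assumes "Ps \<noteq> 0" "Pk \<noteq> 0" "Pr \<noteq> 0" "X \<noteq> 0" "x \<noteq> 0" "Qnk \<noteq> 0" "Tn \<noteq> 0" "Xr \<noteq> 0"
    and "Ps * X = Psk" "FM * Psk = Pall" "Fk * Pr = Pkr" "Fr * Pk = Pkr"
    and "T * qk * Tn = Tr * Qnk" "sr * sr = 1"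
  shows "Pall / Ps * (sk * T / Qnk * Fk / X * (qk * xk) / Pk) =
         (sk * sr) * (xk * Xr) / Tn * (FM * Fr / Pr * sr * Tr / Xr)"
proof -
  have Pall: "Pall = FM * Ps * X" using assms(9,10) by (simp add: algebra_simps)
  have Fk: "Fk = Pkr / Pr" "Fr = Pkr / Pk" using assms(3,2,11,12) by (simp_all add: field_simps)
  have T: "T * qk / Qnk = Tr / Tn" using assms(6,7,13) by (simp add: field_simps)
  have "Pall / Ps * (sk * T / Qnk * Fk / X * (qk * xk) / Pk) = FM * sk * xk * Pkr / (Pr * Pk) * (T * qk / Qnk)"
    unfolding Pall Fk using assms(1-6) by (simp add: field_simps)
  also have "\<dots> = FM * sk * xk * Pkr / (Pr * Pk) * (Tr / Tn)" unfolding T ..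
  also have "\<dots> = (sk * (sr * sr)) * (xk * Xr) / Tn * (FM * Fr / Pr * Tr / Xr)"
    unfolding Fk using assms by (simp add: field_simps)
  finally show ?thesis by (simp add: algebra_simps)
qed

context qx
begin

lemma qpoch_inv: "qpoch (inverse (q ^ n)) q k = (-1) ^ k * q ^ tri k / q ^ (n * k) * ff q n k"
proof (induction k)
  case 0 then show ?case by (simp add: qpoch_def)
next
  case (Suc k)
  have e: "1 - inverse (q ^ n) * q ^ k = - (q ^ k / q ^ n) * (1 - q ^ n / q ^ k)"
    by (simp add: field_simps)
  show ?case unfolding qpoch_Suc Suc ff_Suc e
    by (simp add: power_add field_simps)
qed

lemma qpoch_shift: "qpoch q q s * qpoch (q ^ s * q) q k = qpoch q q (s + k)"
proof (induction k)
  case 0 then show ?case by (simp add: qpoch_def)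
next
  case (Suc k)
  have "qpoch q q s * qpoch (q ^ s * q) q (Suc k) = (qpoch q q s * qpoch (q ^ s * q) q k) * (1 - q ^ s * q * q ^ k)"
    unfolding qpoch_Suc by simp
  also have "\<dots> = qpoch q q (s + Suc k)" unfolding Suc add_Suc_right qqpoch_Suc by (simp add: power_add algebra_simps)
  finally show ?case .
qed

lemma term_eq:
  assumes "k \<le> n" "n \<le> M"
  shows "qpoch q q M / qpoch q q (M - n) * (qpoch (inverse (q ^ n)) q k / qpoch (q ^ (M - n) * q) q k * (q * x) ^ k / qpoch q q k)
     = (-1) ^ n * x ^ n / q ^ tri n * Tm q x M n (n - k)"
proof -
  obtain r where r: "n = k + r" using assms(1) le_Suc_ex by blast
  obtain s where s: "M = n + s" using assms(2) le_Suc_ex by blast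
  have Mn: "M - n = s" using s by simp
  have nk: "n - k = r" using r by simp
  have f1: "qpoch q q s * qpoch (q ^ s * q) q k = qpoch q q (s + k)" by (rule qpoch_shift)
  have f2: "ff q M r * qpoch q q (s + k) = qpoch q q M"
    using ff_qpoch[OF q0 q1, of r M] r s by (simp add: add.commute add.left_commute)
  have f4: "ff q n k * qpoch q q r = qpoch q q n" using ff_qpoch[OF q0 q1, of k n] r by simp
  have f5: "ff q n r * qpoch q q k = qpoch q q n" using ff_qpoch[OF q0 q1, of r n] r by simp
  have f3: "qpoch (inverse (q ^ n)) q k = (-1) ^ k * q ^ tri k / q ^ (n * k) * ff q n k" by (rule qpoch_inv)
  have X0: "qpoch (q ^ s * q) q k \<noteq> 0" using f1 by (metis mult_zero_right qpoch_nz)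
  have pw: "q ^ tri k * q ^ k * q ^ tri n = q ^ tri r * q ^ (n * k)"
    unfolding r power_add[symmetric] using tri_id[of k r] by (simp add: algebra_simps)
  have sr: "(-1::real) ^ r * (-1) ^ r = 1" by (simp add: power_add[symmetric])
  have "qpoch q q M / qpoch q q s * ((-1) ^ k * q ^ tri k / q ^ (n * k) * ff q n k / qpoch (q ^ s * q) q k * (q ^ k * x ^ k) / qpoch q q k)
      = ((-1) ^ k * (-1) ^ r) * (x ^ k * x ^ r) / q ^ tri n * (ff q M r * ff q n r / qpoch q q r * (-1) ^ r * q ^ tri r / x ^ r)"
    by (rule term_alg[OF _ _ _ X0 _ _ _ _ f1 f2 f4 f5 pw sr]) auto
  then show ?thesis
    unfolding Tm_def Mn nk f3[symmetric] unfolding r power_add by (simp add: power_mult_distrib)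
qed

lemma wall_FF:
  assumes "n \<le> M"
  shows "qpoch q q M / qpoch q q (M - n) * wall_poly n x (q ^ (M - n)) q = (-1) ^ n * x ^ n * FF q x M n / q ^ tri n"
proof -
  have "qpoch q q M / qpoch q q (M - n) * wall_poly n x (q ^ (M - n)) q
      = (\<Sum>k\<le>n. qpoch q q M / qpoch q q (M - n) * (qpoch (inverse (q ^ n)) q k / qpoch (q ^ (M - n) * q) q k * (q * x) ^ k / qpoch q q k))"
    unfolding wall_poly_def sum_distrib_left ..
  also have "\<dots> = (\<Sum>k\<le>n. (-1) ^ n * x ^ n / q ^ tri n * Tm q x M n (n - k))"
    using assms by (intro sum.cong refl term_eq) auto
  also have "\<dots> = (-1) ^ n * x ^ n / q ^ tri n * (\<Sum>k\<le>n. Tm q x M n (n - k))"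
    by (simp add: sum_distrib_left)
  also have "(\<Sum>k\<le>n. Tm q x M n (n - k)) = FF q x M n"
    unfolding FF_def atMost_atLeast0 using sum.atLeastAtMost_rev[of "Tm q x M n" 0 n] by simp
  finally show ?thesis by simp
qed

end


context qx
begin

lemma pmf_formula:
  assumes lx: "(1 - q) * lam = x"
  shows "gen_euler_pmf q m lam j =
    x ^ (j + m) * FF q x j m ^ 2 / (gen_euler_norm q m lam * q ^ (m * j) * qpoch q q j * qpoch q q m)"
proof -
  define D where "D = gen_euler_norm q m lam * q ^ (m * j) * qpoch q q j * qpoch q q m"
  have pl: "(1 - q) ^ d * lam ^ d = x ^ d" for d using lx by (simp add: power_mult_distrib[symmetric])
  have key: "q ^ (2 * tri a) * x ^ d / D * ((-1) ^ a * x ^ a * FF q x j m / q ^ tri a)^2 = x ^ (d + 2 * a) * FF q x j m ^ 2 / D" for a d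
  proof -
    have s1: "((-1::real) ^ a)^2 = 1" by (simp add: power_even_eq[symmetric])
    have "((-1::real) ^ a * x ^ a * FF q x j m / q ^ tri a)^2 = x ^ (2 * a) * FF q x j m ^ 2 / q ^ (2 * tri a)"
      by (simp add: power_mult_distrib power_divide power_even_eq s1)
    then show ?thesis by (simp add: power_add)
  qed
  show ?thesis
  proof (cases "m \<le> j")
    case True
    have w: "qpoch q q j / qpoch q q (j - m) * wall_poly m x (q ^ (j - m)) q = (-1) ^ m * x ^ m * FF q x j m / q ^ tri m"
      using wall_FF[OF True] .
    have mn: "min m j = m" "max m j = j" using True by auto
    have "gen_euler_pmf q m lam j = q ^ (2 * (m * (m - 1) div 2)) * (1 - q) ^ (j - m) * lam ^ (j - m) / D *
        (qpoch q q j / qpoch q q (j - m) * wall_poly m x (q ^ (j - m)) q)^2"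
      unfolding gen_euler_pmf_def Let_def D_def mn lx ..
    also have "\<dots> = q ^ (2 * tri m) * ((1 - q) ^ (j - m) * lam ^ (j - m)) / D *
        (qpoch q q j / qpoch q q (j - m) * wall_poly m x (q ^ (j - m)) q)^2"
      by (simp only: tri_eq mult.assoc)
    also have "\<dots> = q ^ (2 * tri m) * x ^ (j - m) / D * ((-1) ^ m * x ^ m * FF q x j m / q ^ tri m)^2"
      unfolding pl w ..
    also have "\<dots> = x ^ (j - m + 2 * m) * FF q x j m ^ 2 / D" by (rule key)
    also have "j - m + 2 * m = j + m" using True by simp
    finally show ?thesis unfolding D_def .
  next
    case False
    then have jm: "j \<le> m" by simp
    have w: "qpoch q q m / qpoch q q (m - j) * wall_poly j x (q ^ (m - j)) q = (-1) ^ j * x ^ j * FF q x j m / q ^ tri j"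
      using wall_FF[OF jm] by (simp add: FF_sym)
    have mn: "min m j = j" "max m j = m" using jm by auto
    have "gen_euler_pmf q m lam j = q ^ (2 * (j * (j - 1) div 2)) * (1 - q) ^ (m - j) * lam ^ (m - j) / D *
        (qpoch q q m / qpoch q q (m - j) * wall_poly j x (q ^ (m - j)) q)^2"
      unfolding gen_euler_pmf_def Let_def D_def mn lx ..
    also have "\<dots> = q ^ (2 * tri j) * ((1 - q) ^ (m - j) * lam ^ (m - j)) / D *
        (qpoch q q m / qpoch q q (m - j) * wall_poly j x (q ^ (m - j)) q)^2"
      by (simp only: tri_eq mult.assoc)
    also have "\<dots> = q ^ (2 * tri j) * x ^ (m - j) / D * ((-1) ^ j * x ^ j * FF q x j m / q ^ tri j)^2"
      unfolding pl w ..
    also have "\<dots> = x ^ (m - j + 2 * j) * FF q x j m ^ 2 / D" by (rule key)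
    also have "m - j + 2 * j = j + m" using jm by simp
    finally show ?thesis unfolding D_def .
  qed
qed

lemma qpoch_qa: "qpoch (q * a) q n * (1 - a) = qpoch a q n * (1 - a * q ^ n)"
proof (induction n)
  case 0 then show ?case by (simp add: qpoch_def)
next
  case (Suc n)
  have "qpoch (q * a) q (Suc n) * (1 - a) = (qpoch (q * a) q n * (1 - a)) * (1 - q * a * q ^ n)"
    unfolding qpoch_Suc by (simp add: algebra_simps)
  also have "\<dots> = qpoch a q (Suc n) * (1 - a * q ^ Suc n)"
    unfolding Suc qpoch_Suc by (simp add: algebra_simps)
  finally show ?case .
qed

lemma qpoch_pos_a:
  assumes "0 \<le> a" "a < 1"
  shows "0 < qpoch a q n"
  unfolding qpoch_def
proof (rule prod_pos)
  fix k assume "k \<in> {..<n}"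
  have "a * q ^ k \<le> a * 1" using assms qpow_le1[OF q0 q1, of k] by (intro mult_left_mono) auto
  then show "0 < 1 - a * q ^ k" using assms by simp
qed

lemma norm_eq:
  assumes lx: "(1 - q) * lam = x" and xq: "x < q ^ m"
  shows "gen_euler_norm q m lam = (1 - x) * EE x / (q ^ m - x)"
proof -
  define y where "y = x / q ^ m"
  have y0: "0 \<le> y" and y1: "y < 1" using x0 xq unfolding y_def by auto
  have e2: "inverse (q ^ m) * (1 - q) * lam = y"
  proof -
    have "inverse (q ^ m) * (1 - q) * lam = inverse (q ^ m) * ((1 - q) * lam)" by (simp only: mult.assoc)
    also have "\<dots> = y" unfolding lx y_def by (simp add: divide_inverse mult.commute)
    finally show ?thesis .
  qed
  have e1: "q * inverse (q ^ m) * (1 - q) * lam = q * y"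
    using e2 by (simp add: mult.assoc)
  have inf: "qpoch_inf y q = 1 / EE y" using y0 y1 by (rule qpoch_inf_EE)
  have it: "EE x = qpoch y q m * EE y" using EE_iter[OF y0 y1, of m] unfolding y_def by simp
  have qa: "qpoch (q * y) q m * (1 - y) = qpoch y q m * (1 - x)" using qpoch_qa[of y m] unfolding y_def by simp
  have pp: "0 < qpoch y q m" using y0 y1 by (rule qpoch_pos_a)
  have E0: "0 < EE y" using EE_ge1[OF y0 y1] by simp
  have y1': "1 - y \<noteq> 0" using y1 by simp
  have qmx: "q ^ m * (1 - y) = q ^ m - x" unfolding y_def by (simp add: field_simps)
  have "gen_euler_norm q m lam = qpoch (q * y) q m * EE y / q ^ m"
    unfolding gen_euler_norm_def e1 e2 inf using E0 by simp
  also have "qpoch (q * y) q m = qpoch y q m * (1 - x) / (1 - y)" using qa y1' by (simp add: field_simps)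
  also have "qpoch y q m * (1 - x) / (1 - y) * EE y / q ^ m = (1 - x) * (qpoch y q m * EE y) / (q ^ m * (1 - y))"
    by (simp add: field_simps)
  also have "\<dots> = (1 - x) * EE x / (q ^ m - x)" unfolding it[symmetric] qmx ..
  finally show ?thesis .
qed

end



lemma comb3:
  fixes u w d :: real
  assumes "d \<noteq> 0"
  shows "(u / d)^2 * 1 + (- 2 * (u / d) * (1 / d)) * u + (1 / d)^2 * w = (u^2 - 2 * u * u + w) / d^2"
  using assms by (simp add: field_simps power2_eq_square)

lemma final_alg:
  fixes q Q x lam :: real
  assumes "q < 1" "Q > 0" "lam = x / (1 - q)"
  shows "(1 / (1 - q) - (lam + (1 - Q) / (1 - q)))^2 * 1
       + (- 2 * (1 / (1 - q) - (lam + (1 - Q) / (1 - q))) * (1 / (1 - q))) * (Q - x)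
       + (1 / (1 - q))^2 * ((Q - x) * (Q + x - (1 + q) * Q * x))
     = lam^2 * Q * (1 + q - 2 * inverse Q) + lam * Q * (2 * ((1 - Q) / (1 - q)) + Q)"
proof -
  have q1: "1 - q \<noteq> 0" using assms by simp
  have a: "1 / (1 - q) - (lam + (1 - Q) / (1 - q)) = (Q - x) / (1 - q)"
    using q1 assms(3) by (simp add: field_simps)
  have "(1 / (1 - q) - (lam + (1 - Q) / (1 - q)))^2 * 1
       + (- 2 * (1 / (1 - q) - (lam + (1 - Q) / (1 - q))) * (1 / (1 - q))) * (Q - x)
       + (1 / (1 - q))^2 * ((Q - x) * (Q + x - (1 + q) * Q * x))
       = ((Q - x)^2 - 2 * (Q - x) * (Q - x) + (Q - x) * (Q + x - (1 + q) * Q * x)) / (1 - q)^2"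
    unfolding a using comb3[OF q1] .
  also have "\<dots> = x * (Q - x) * (2 - (1 + q) * Q) / (1 - q)^2"
  proof -
    have num: "(Q - x)^2 - 2 * (Q - x) * (Q - x) + (Q - x) * (Q + x - (1 + q) * Q * x) = x * (Q - x) * (2 - (1 + q) * Q)"
      by (simp add: algebra_simps power2_eq_square)
    show ?thesis unfolding num ..
  qed
  also have "\<dots> = (x^2 * ((1 + q) * Q - 2) + x * Q * (2 - (1 + q) * Q)) / (1 - q)^2"
  proof -
    have num: "x * (Q - x) * (2 - (1 + q) * Q) = x^2 * ((1 + q) * Q - 2) + x * Q * (2 - (1 + q) * Q)"
      by (simp add: algebra_simps power2_eq_square)
    show ?thesis unfolding num ..
  qed
  also have "\<dots> = x^2 * ((1 + q) * Q - 2) / (1 - q)^2 + x * Q * (2 - (1 + q) * Q) / (1 - q)^2"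
    by (rule add_divide_distrib)
  also have "x^2 * ((1 + q) * Q - 2) / (1 - q)^2 = lam^2 * Q * (1 + q - 2 * inverse Q)"
  proof -
    have e: "Q * (1 + q - 2 * inverse Q) = (1 + q) * Q - 2" using assms(2) by (simp add: field_simps)
    have "lam^2 * Q * (1 + q - 2 * inverse Q) = lam^2 * ((1 + q) * Q - 2)" using e by (simp add: mult.assoc)
    also have "\<dots> = x^2 * ((1 + q) * Q - 2) / (1 - q)^2" unfolding assms(3) by (simp add: power_divide)
    finally show ?thesis by simp
  qed
  also have "x * Q * (2 - (1 + q) * Q) / (1 - q)^2 = lam * Q * (2 * ((1 - Q) / (1 - q)) + Q)"
    unfolding assms(3) using q1 assms(2) by (simp add: field_simps power2_eq_square)
  finally show ?thesis .
qed

theorem proposition5p1: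
  fixes q lam :: real and m :: nat
  assumes "0 < q" and "q < 1"
    and "0 < lam" and "lam < q ^ m / (1 - q)"
  shows "((\<lambda>j. qnum q j * gen_euler_pmf q m lam j) sums (lam + qnum q m)) \<and>
         ((\<lambda>j. (qnum q j - (lam + qnum q m))\<^sup>2 * gen_euler_pmf q m lam j) sums
           (lam\<^sup>2 * q ^ m * (1 + q - 2 * inverse (q ^ m)) + lam * q ^ m * (2 * qnum q m + q ^ m)))"
proof -
  define x where "x = (1 - q) * lam"
  have x0: "0 < x" using assms by (simp add: x_def)
  interpret qx q x using assms x0 by unfold_locales auto
  have qq1: "1 - q \<noteq> 0" using assms by simp
  have xq: "x < q ^ m" using assms(4) assms(2) unfolding x_def by (simp add: field_simps)
  have lx: "(1 - q) * lam = x" by (simp add: x_def)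
  have lam: "lam = x / (1 - q)" using qq1 by (simp add: x_def)
  define y where "y = yy m"
  have y0: "0 \<le> y" and y1: "y < 1" unfolding y_def using yy_pos yy_lt1[OF xq] by (auto simp: less_imp_le)
  define N where "N = gen_euler_norm q m lam"
  have N: "N = (1 - x) * EE x / (q ^ m - x)" unfolding N_def by (rule norm_eq[OF lx xq])
  have qm1: "q ^ m \<le> 1" using qpow_le1[OF q0 q1] .
  have x1: "x < 1" using xq qm1 by simp
  have E1: "1 \<le> EE x" using x0 x1 by (intro EE_ge1) auto
  have Npos: "0 < N" unfolding N using x1 xq E1 by simp
  define K where "K = x ^ m / (N * qpoch q q m)"
  have pmfK: "gen_euler_pmf q m lam j = K * (W q y j * FF q x j m ^ 2)" for j
  proof -
    have "gen_euler_pmf q m lam j = x ^ (j + m) * FF q x j m ^ 2 / (N * q ^ (m * j) * qpoch q q j * qpoch q q m)"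
      unfolding N_def by (rule pmf_formula[OF lx])
    also have "\<dots> = K * (W q y j * FF q x j m ^ 2)"
      unfolding K_def W_def y_def yy_def using Npos
      by (simp add: power_divide power_add power_mult[symmetric] mult.commute[of m] field_simps)
    finally show ?thesis .
  qed
  have cl: "Am m = cA m" "Bm m = cB m" "Cm m = cC m" using closed_forms[OF xq] by auto
  have nz1: "1 - x \<noteq> 0" "q ^ m - x \<noteq> 0" "EE x \<noteq> 0" "x ^ m \<noteq> 0" using x1 xq E1 by auto
  have KA: "K * cA m = 1"
  proof -
    have "K * cA m = (1 - x) * EE x / ((q ^ m - x) * N)"
      unfolding K_def cA_def using nz1 Npos by (simp add: field_simps)
    also have "(q ^ m - x) * N = (1 - x) * EE x" unfolding N using nz1 by simp
    also have "(1 - x) * EE x / ((1 - x) * EE x) = 1" using nz1 by simp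
    finally show ?thesis .
  qed
  have cBA: "cB m = cA m * (q ^ m - x)" unfolding cA_def cB_def using xq by (simp add: field_simps)
  have cCA: "cC m = cA m * ((q ^ m - x) * (q ^ m + x - (1 + q) * q ^ m * x))"
    unfolding cA_def cC_def using xq by (simp add: field_simps)
  have KB: "K * cB m = q ^ m - x" unfolding cBA using KA by (simp add: mult.assoc[symmetric])
  have KC: "K * cC m = (q ^ m - x) * (q ^ m + x - (1 + q) * q ^ m * x)"
    unfolding cCA using KA by (simp add: mult.assoc[symmetric])
  have bF: "bdd (\<lambda>j. FF q x j m ^ 2)" "bdd (\<lambda>j. q ^ j * FF q x j m ^ 2)" "bdd (\<lambda>j. q ^ j * (q ^ j * FF q x j m ^ 2))"
    by (intro bddI)+
  define f1 where "f1 = (\<lambda>j. K / (1 - q) * (1 * FF q x j m ^ 2 + (-1) * (q ^ j * FF q x j m ^ 2)))"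
  have e1: "(\<lambda>j. qnum q j * gen_euler_pmf q m lam j) = (\<lambda>j. W q y j * f1 j)"
    unfolding f1_def pmfK qnum_def using qq1 by (intro ext) (simp add: field_simps)
  have "SS q y f1 = K / (1 - q) * SS q y (\<lambda>j. 1 * FF q x j m ^ 2 + (-1) * (q ^ j * FF q x j m ^ 2))"
    unfolding f1_def using y0 y1 bF by (intro SS_cmult) auto
  also have "SS q y (\<lambda>j. 1 * FF q x j m ^ 2 + (-1) * (q ^ j * FF q x j m ^ 2)) = 1 * Am m + (-1) * Bm m"
    unfolding Am_def Bm_def y_def[symmetric] using y0 y1 bF by (intro SS_lin) auto
  finally have S1: "SS q y f1 = (K * cA m - K * cB m) / (1 - q)" unfolding cl using qq1 by (simp add: field_simps)
  have bf1: "bdd f1" unfolding f1_def by (intro bddI)+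
  have sum1: "(\<lambda>j. qnum q j * gen_euler_pmf q m lam j) sums (lam + qnum q m)"
  proof -
    have "(\<lambda>j. W q y j * f1 j) sums SS q y f1" using bf1 y0 y1 by (rule sums_SS)
    moreover have "SS q y f1 = lam + qnum q m"
      unfolding S1 KA KB qnum_def lam add_divide_distrib[symmetric] by (simp add: algebra_simps)
    ultimately show ?thesis unfolding e1 by simp
  qed
  define \<mu> where "\<mu> = lam + qnum q m"
  define a where "a = 1 / (1 - q) - \<mu>"
  define b where "b = 1 / (1 - q)"
  define f2 where "f2 = (\<lambda>j. K * (a^2 * FF q x j m ^ 2 + (- 2 * a * b) * (q ^ j * FF q x j m ^ 2) + b^2 * (q ^ j * (q ^ j * FF q x j m ^ 2))))"
  have e2: "(\<lambda>j. (qnum q j - \<mu>)\<^sup>2 * gen_euler_pmf q m lam j) = (\<lambda>j. W q y j * f2 j)"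
  proof (rule ext)
    fix j
    have d: "qnum q j - \<mu> = a - b * q ^ j" unfolding qnum_def a_def b_def by (simp add: diff_divide_distrib)
    show "(qnum q j - \<mu>)\<^sup>2 * gen_euler_pmf q m lam j = W q y j * f2 j"
      unfolding f2_def pmfK d by (simp add: power2_eq_square algebra_simps)
  qed
  have "SS q y f2 = K * SS q y (\<lambda>j. a^2 * FF q x j m ^ 2 + (- 2 * a * b) * (q ^ j * FF q x j m ^ 2) + b^2 * (q ^ j * (q ^ j * FF q x j m ^ 2)))"
    unfolding f2_def using y0 y1 bF by (intro SS_cmult) (auto intro!: bddI)
  also have "SS q y (\<lambda>j. a^2 * FF q x j m ^ 2 + (- 2 * a * b) * (q ^ j * FF q x j m ^ 2) + b^2 * (q ^ j * (q ^ j * FF q x j m ^ 2)))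
      = a^2 * Am m + (- 2 * a * b) * Bm m + b^2 * Cm m"
    unfolding Am_def Bm_def Cm_def y_def[symmetric] using y0 y1 bF by (intro SS_lin3) auto
  finally have S2: "SS q y f2 = a^2 * (K * cA m) + (- 2 * a * b) * (K * cB m) + b^2 * (K * cC m)"
    unfolding cl by (simp add: algebra_simps)
  have bf2: "bdd f2" unfolding f2_def by (intro bddI)+
  have sum2: "(\<lambda>j. (qnum q j - (lam + qnum q m))\<^sup>2 * gen_euler_pmf q m lam j) sums
           (lam\<^sup>2 * q ^ m * (1 + q - 2 * inverse (q ^ m)) + lam * q ^ m * (2 * qnum q m + q ^ m))"
  proof -
    have "(\<lambda>j. W q y j * f2 j) sums SS q y f2" using bf2 y0 y1 by (rule sums_SS)
    moreover have "SS q y f2 = lam\<^sup>2 * q ^ m * (1 + q - 2 * inverse (q ^ m)) + lam * q ^ m * (2 * qnum q m + q ^ m)"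
      unfolding S2 KA KB KC a_def b_def \<mu>_def qnum_def
      using final_alg[OF assms(2) qpow_pos[of m] lam] by (simp add: mult.assoc)
    ultimately show ?thesis using e2 unfolding \<mu>_def by simp
  qed
  show ?thesis using sum1 sum2 by blast
qed


end
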